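(* Let $m\ge 7$ be an integer. Then for every integer $n\ge m-1$, $$F_{n+2^{m-6},2}\equiv F_{n,2}\pmod{2^m},$$ i.e. from the term of index $m-1$ onward the sequence $(F_{n,2}\bmod 2^m)_{n\ge0}$ is periodic with period $2^{m-6}$.
   Context: For positive integers $r\le m\le n$, $S_r(n,m)$ denotes the $r$-Stirling number of the second kind: the number of partitions of $\{1,\dots,n\}$ into $m$ non-empty blocks such that $1,\dots,r$ lie in pairwise distinct blocks. For a positive integer $r$ and integer $n\ge 0$, the $r$-Fubini number is $F_{n,r}=\sum_{k=0}^{n}(k+r)!\,S_r(n+r,k+r)$. *)

theory Defs
  imports Main "HOL-Library.Disjoint_Sets"
begin

definition r_stirling :: "nat \<Rightarrow> nat \<Rightarrow> nat \<Rightarrow> nat" where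
  "r_stirling r n m = card {P. partition_on {1..n} P \<and> card P = m \<and>
      (\<forall>B\<in>P. \<forall>i\<in>{1..r}. \<forall>j\<in>{1..r}. i \<in> B \<and> j \<in> B \<longrightarrow> i = j)}"

definition r_fubini :: "nat \<Rightarrow> nat \<Rightarrow> nat" where
  "r_fubini n r = (\<Sum>k=0..n. fact (k + r) * r_stirling r (n + r) (k + r))"

end

theory Submission
  imports Defs
begin

lemma pon_iff: "partition_on A P \<longleftrightarrow> (\<Union>P = A \<and> (\<forall>p\<in>P. \<forall>q\<in>P. p \<noteq> q \<longrightarrow> p \<inter> q = {}) \<and> {} \<notin> P)"
  by (auto simp: partition_on_def pairwise_def disjnt_def)

definition okb :: "nat set \<Rightarrow> bool" where "okb B \<longleftrightarrow> \<not> (1 \<in> B \<and> 2 \<in> B)"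

definition Parts :: "nat set \<Rightarrow> nat \<Rightarrow> nat set set set" where
  "Parts A M = {P. partition_on A P \<and> card P = M \<and> (\<forall>B\<in>P. okb B)}"

lemma r_stirling_Parts: "r_stirling 2 N M = card (Parts {1..N} M)"
proof -
  have "\<And>B. (\<forall>i\<in>{1..2::nat}. \<forall>j\<in>{1..2}. i \<in> B \<and> j \<in> B \<longrightarrow> i = j) \<longleftrightarrow> okb B"
  proof -
    have "{1..2::nat} = {1,2}" by auto
    then show "\<And>B. (\<forall>i\<in>{1..2::nat}. \<forall>j\<in>{1..2}. i \<in> B \<and> j \<in> B \<longrightarrow> i = j) \<longleftrightarrow> okb B"
      unfolding okb_def by auto
  qed
  then show ?thesis unfolding r_stirling_def Parts_def by simp
qed

lemma finite_Parts: "finite A \<Longrightarrow> finite (Parts A M)"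
  by (rule finite_subset[OF _ finitely_many_partition_on]) (auto simp: Parts_def)

lemma Parts_zero: assumes "A \<noteq> {}" "finite A" shows "Parts A 0 = {}"
proof -
  have False if "partition_on A P" "card P = 0" for P
  proof -
    from that have "finite P" using finite_elements assms by blast
    with that have "P = {}" by simp
    with that assms show False by (simp add: pon_iff)
  qed
  then show ?thesis unfolding Parts_def by auto
qed

lemma Parts_base: "Parts {1,2} M = (if M = 2 then {{{1},{2}}} else {})"
proof -
  have *: "P = {{1},{2}}" if "P \<in> Parts {1,2} M" for P
  proof -
    from that have p: "partition_on {1,2} P" and ok: "\<forall>B\<in>P. okb B" unfolding Parts_def by auto
    have sub: "P \<subseteq> {{1},{2}}"
    proof
      fix B assume BP: "B \<in> P"
      from p BP have B12: "B \<subseteq> {1,2}" unfolding pon_iff by blast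
      from p BP have Bne: "B \<noteq> {}" unfolding pon_iff by blast
      from ok BP have okB: "\<not> (1 \<in> B \<and> 2 \<in> B)" unfolding okb_def by blast
      show "B \<in> {{1},{2}}"
      proof (cases "1 \<in> B")
        case True
        with okB have "2 \<notin> B" by blast
        with B12 True have "B = {1}" by blast
        then show ?thesis by simp
      next
        case False
        with Bne B12 have "2 \<in> B" by blast
        with B12 False have "B = {2}" by blast
        then show ?thesis by simp
      qed
    qed
    from p have un: "\<Union>P = {1,2}" unfolding pon_iff by blast
    have "{1} \<in> P"
    proof -
      have "1 \<in> \<Union>P" using un by simp
      then obtain B where "B \<in> P" "1 \<in> B" by blast
      moreover from sub \<open>B \<in> P\<close> have "B = {1} \<or> B = {2}" by blast
      ultimately have "B = {1}" by auto
      with \<open>B \<in> P\<close> show ?thesis by simp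
    qed
    moreover have "{2} \<in> P"
    proof -
      have "2 \<in> \<Union>P" using un by simp
      then obtain B where "B \<in> P" "2 \<in> B" by blast
      moreover from sub \<open>B \<in> P\<close> have "B = {1} \<or> B = {2}" by blast
      ultimately have "B = {2}" by auto
      with \<open>B \<in> P\<close> show ?thesis by simp
    qed
    ultimately show ?thesis using sub by blast
  qed
  have pp: "partition_on {1,2} {{1::nat},{2}}" unfolding pon_iff by auto
  have c2: "card {{1::nat},{2}} = 2" by simp
  have okk: "\<forall>B\<in>{{1::nat},{2}}. okb B" unfolding okb_def by simp
  have in2: "{{1::nat},{2}} \<in> Parts {1,2} 2" unfolding Parts_def using pp c2 okk by blast
  have M2: "M = 2" if "P \<in> Parts {1,2} M" for P
  proof -
    from that have "card P = M" unfolding Parts_def by blast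
    with *[OF that] c2 show ?thesis by simp
  qed
  show ?thesis
  proof (cases "M = 2")
    case True
    have "P \<in> Parts {1,2} M \<longleftrightarrow> P \<in> {{{1},{2}}}" for P
    proof
      assume "P \<in> Parts {1,2} M" then show "P \<in> {{{1},{2}}}" using *[of P] by simp
    next
      assume "P \<in> {{{1},{2}}}" then show "P \<in> Parts {1,2} M" using in2 True by simp
    qed
    then have "Parts {1,2} M = {{{1},{2}}}" by (rule set_eqI)
    then show ?thesis using True by simp
  next
    case False
    have nP: "P \<notin> Parts {1,2} M" for P
    proof
      assume "P \<in> Parts {1,2} M"
      then have "M = 2" by (rule M2)
      with False show False by simp
    qed
    have "Parts {1,2} M = {}" using nP by auto
    then show ?thesis using False by simp
  qed
qed

lemma Parts_blocks:
  assumes "P \<in> Parts A M" "B \<in> P"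
  shows "B \<subseteq> A" "B \<noteq> {}" "okb B" "partition_on A P" "card P = M"
  using assms by (auto simp: Parts_def pon_iff)

lemma Parts_disj:
  assumes "P \<in> Parts A M" "B \<in> P" "D \<in> P" "B \<noteq> D"
  shows "B \<inter> D = {}"
  using assms by (auto simp: Parts_def pon_iff)

lemma Parts_rec1:
  assumes fin: "finite A" and x: "x \<notin> A" "x \<noteq> 1" "x \<noteq> 2"
  shows "card {P \<in> Parts (insert x A) (Suc M). {x} \<in> P} = card (Parts A M)"
proof -
  have "bij_betw (\<lambda>Q. insert {x} Q) (Parts A M) {P \<in> Parts (insert x A) (Suc M). {x} \<in> P}"
  proof (rule bij_betw_byWitness[where f' = "\<lambda>P. P - {{x}}"])
    show "\<forall>Q\<in>Parts A M. insert {x} Q - {{x}} = Q"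
    proof
      fix Q assume Q: "Q \<in> Parts A M"
      then have "{x} \<notin> Q" using Parts_blocks(1)[OF Q] x by auto
      then show "insert {x} Q - {{x}} = Q" by auto
    qed
    show "\<forall>P\<in>{P \<in> Parts (insert x A) (Suc M). {x} \<in> P}. insert {x} (P - {{x}}) = P"
      by auto
    show "(\<lambda>Q. insert {x} Q) ` Parts A M \<subseteq> {P \<in> Parts (insert x A) (Suc M). {x} \<in> P}"
    proof (rule image_subsetI)
      fix Q assume Q: "Q \<in> Parts A M"
      have nx: "{x} \<notin> Q" using Parts_blocks(1)[OF Q] x by auto
      have pQ: "partition_on A Q" and cQ: "card Q = M" using Q by (auto simp: Parts_def)
      have fQ: "finite Q" using finite_elements[OF fin pQ] .
      have dj: "disjnt {x} (\<Union>Q)" using pQ x(1) unfolding pon_iff by (auto simp: disjnt_def)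
      have "insert x A - {x} = A" using x(1) by auto
      then have "partition_on (insert x A) (insert {x} Q)"
        using partition_on_insert[OF dj, of "insert x A"] pQ by simp
      moreover have "card (insert {x} Q) = Suc M" using fQ nx cQ by simp
      moreover have "\<forall>B\<in>insert {x} Q. okb B" using Q x by (auto simp: Parts_def okb_def)
      ultimately show "insert {x} Q \<in> {P \<in> Parts (insert x A) (Suc M). {x} \<in> P}" by (simp add: Parts_def)
    qed
    show "(\<lambda>P. P - {{x}}) ` {P \<in> Parts (insert x A) (Suc M). {x} \<in> P} \<subseteq> Parts A M"
    proof (rule image_subsetI)
      fix P assume "P \<in> {P \<in> Parts (insert x A) (Suc M). {x} \<in> P}"
      then have P: "P \<in> Parts (insert x A) (Suc M)" and xP: "{x} \<in> P" by auto
      have pP: "partition_on (insert x A) P" and cP: "card P = Suc M" using P by (auto simp: Parts_def)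
      have fP: "finite P" using finite_elements[OF _ pP] fin by simp
      have "\<And>B. B \<in> P \<Longrightarrow> B \<noteq> {x} \<Longrightarrow> x \<notin> B" using Parts_disj[OF P _ xP] by blast
      then have dj: "disjnt {x} (\<Union>(P - {{x}}))" by (auto simp: disjnt_def)
      have "insert {x} (P - {{x}}) = P" using xP by auto
      with pP have "partition_on (insert x A) (insert {x} (P - {{x}}))" by simp
      then have "partition_on (insert x A - {x}) (P - {{x}})"
        using partition_on_insert[OF dj] by blast
      moreover have "insert x A - {x} = A" using x(1) by auto
      ultimately have "partition_on A (P - {{x}})" by simp
      moreover have "card (P - {{x}}) = M" using fP xP cP by simp
      moreover have "\<forall>B\<in>P - {{x}}. okb B" using P by (auto simp: Parts_def)
      ultimately show "P - {{x}} \<in> Parts A M" by (simp add: Parts_def)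
    qed
  qed
  then show ?thesis by (simp add: bij_betw_same_card)
qed


lemma Parts_rec2:
  assumes fin: "finite A" and x: "x \<notin> A" "x \<noteq> 1" "x \<noteq> 2"
  shows "card {P \<in> Parts (insert x A) (Suc M). {x} \<notin> P} = Suc M * card (Parts A (Suc M))"
proof -
  define g where "g = (\<lambda>(Q::nat set set, B::nat set). insert (insert x B) (Q - {B}))"
  define S where "S = Sigma (Parts A (Suc M)) (\<lambda>Q. Q)"
  have inS: "Q \<in> Parts A (Suc M)" "B \<in> Q" if "(Q,B) \<in> S" for Q B using that by (auto simp: S_def)
  have inj: "inj_on g S"
  proof (rule inj_onI, clarify)
    fix Q B Q' B' assume a: "(Q,B) \<in> S" "(Q',B') \<in> S" and e: "g (Q,B) = g (Q',B')"
    note q = inS[OF a(1)] and q' = inS[OF a(2)]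
    have xB: "x \<notin> B" "x \<notin> B'" using Parts_blocks(1)[OF q] Parts_blocks(1)[OF q'] x by auto
    have xD: "\<And>D. D \<in> Q' \<Longrightarrow> x \<notin> D" using Parts_blocks(1)[OF q'(1)] x by blast
    have xD2: "\<And>D. D \<in> Q \<Longrightarrow> x \<notin> D" using Parts_blocks(1)[OF q(1)] x by blast
    have "insert x B \<in> g (Q,B)" by (simp add: g_def)
    with e have "insert x B \<in> g (Q',B')" by simp
    then have "insert x B \<in> insert (insert x B') (Q' - {B'})" by (simp add: g_def)
    then have "insert x B = insert x B'" using xD by auto
    then have BB: "B = B'" using xB by (metis insert_ident)
    have "Q - {B} = g (Q,B) - {insert x B}" using xD2 by (auto simp: g_def)
    also have "\<dots> = Q' - {B}" using xD e BB by (auto simp: g_def)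
    finally have "Q - {B} = Q' - {B}" .
    then show "Q = Q' \<and> B = B'" using q q' BB by blast
  qed
  have img: "g ` S = {P \<in> Parts (insert x A) (Suc M). {x} \<notin> P}"
  proof
    show "g ` S \<subseteq> {P \<in> Parts (insert x A) (Suc M). {x} \<notin> P}"
    proof (rule image_subsetI)
      fix z assume zS: "z \<in> S"
      obtain Q B where zq: "z = (Q,B)" by (cases z)
      with zS have a: "(Q,B) \<in> S" by simp
      note q = inS[OF a]
      have pQ: "partition_on A Q" and cQ: "card Q = Suc M" using q by (auto simp: Parts_def)
      have fQ: "finite Q" using finite_elements[OF fin pQ] .
      have BA: "B \<subseteq> A" "B \<noteq> {}" using Parts_blocks[OF q(1) q(2)] by auto
      have xD: "\<And>D. D \<in> Q \<Longrightarrow> x \<notin> D" using Parts_blocks(1)[OF q(1)] x by blast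
      have dj: "\<And>D. D \<in> Q \<Longrightarrow> D \<noteq> B \<Longrightarrow> D \<inter> B = {}" using Parts_disj[OF q(1)] q(2) by blast
      have nin: "insert x B \<notin> Q - {B}" using xD by auto
      have djB: "disjnt B (\<Union>(Q - {B}))" using dj by (auto simp: disjnt_def)
      have "insert B (Q - {B}) = Q" using q(2) by auto
      with pQ have "partition_on A (insert B (Q - {B}))" by simp
      then have pr: "partition_on (A - B) (Q - {B})" using partition_on_insert[OF djB] by blast
      have djxB: "disjnt (insert x B) (\<Union>(Q - {B}))" using dj xD by (auto simp: disjnt_def)
      have "insert x A - insert x B = A - B" using x(1) by auto
      then have "partition_on (insert x A) (insert (insert x B) (Q - {B}))"
        using partition_on_insert[OF djxB, of "insert x A"] pr BA by auto
      moreover have "card (insert (insert x B) (Q - {B})) = Suc M"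
        using fQ nin cQ q(2) by (simp add: card_insert_if)
      moreover have "\<forall>D\<in>insert (insert x B) (Q - {B}). okb D"
        using q(1) q(2) x by (auto simp: Parts_def okb_def)
      moreover have "{x} \<notin> insert (insert x B) (Q - {B})"
        using xD BA q(2) x(1) by blast
      ultimately show "g z \<in> {P \<in> Parts (insert x A) (Suc M). {x} \<notin> P}"
        by (simp add: Parts_def g_def zq)
    qed
    show "{P \<in> Parts (insert x A) (Suc M). {x} \<notin> P} \<subseteq> g ` S"
    proof
      fix P assume "P \<in> {P \<in> Parts (insert x A) (Suc M). {x} \<notin> P}"
      then have P: "P \<in> Parts (insert x A) (Suc M)" and nxP: "{x} \<notin> P" by auto
      have pP: "partition_on (insert x A) P" and cP: "card P = Suc M" using P by (auto simp: Parts_def)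
      have fP: "finite P" using finite_elements[OF _ pP] fin by simp
      have "x \<in> \<Union>P" by (subst partition_onD1[OF pP, symmetric]) simp
      then obtain C where C: "C \<in> P" "x \<in> C" by blast
      define B where "B = C - {x}"
      define Q where "Q = insert B (P - {C})"
      have Cne: "C \<noteq> {x}" using C nxP by auto
      have Bne: "B \<noteq> {}" using C Cne by (auto simp: B_def)
      have xD: "\<And>D. D \<in> P \<Longrightarrow> D \<noteq> C \<Longrightarrow> x \<notin> D" using Parts_disj[OF P _ C(1)] C(2) by blast
      have djC: "\<And>D. D \<in> P \<Longrightarrow> D \<noteq> C \<Longrightarrow> D \<inter> C = {}" using Parts_disj[OF P _ C(1)] by blast
      have Bnin: "B \<notin> P - {C}"
      proof
        assume "B \<in> P - {C}"
        then have "B \<inter> C = {}" using djC by blast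
        then show False using Bne by (auto simp: B_def)
      qed
      have djC2: "disjnt C (\<Union>(P - {C}))" using djC by (auto simp: disjnt_def)
      have "insert C (P - {C}) = P" using C(1) by auto
      with pP have "partition_on (insert x A) (insert C (P - {C}))" by simp
      then have prP: "partition_on (insert x A - C) (P - {C})" using partition_on_insert[OF djC2] by blast
      have CxB: "C = insert x B" using C(2) by (auto simp: B_def)
      have "insert x A - C = A - B" using x(1) CxB by auto
      with prP have pr2: "partition_on (A - B) (P - {C})" by simp
      have BA: "B \<subseteq> A"
      proof -
        have "C \<subseteq> insert x A" using pP C(1) unfolding pon_iff by blast
        then show ?thesis by (auto simp: B_def)
      qed
      have djB: "disjnt B (\<Union>(P - {C}))" using djC by (auto simp: disjnt_def B_def)
      have pQ: "partition_on A Q"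
        unfolding Q_def using partition_on_insert[OF djB, of A] pr2 BA Bne by simp
      have cQ: "card Q = Suc M" using fP Bnin cP C(1) by (simp add: Q_def card_insert_if)
      have okQ: "\<forall>D\<in>Q. okb D" using P C(1) by (auto simp: Parts_def okb_def Q_def B_def)
      have Qin: "Q \<in> Parts A (Suc M)" using pQ cQ okQ by (simp add: Parts_def)
      have "(Q, B) \<in> S" using Qin by (simp add: S_def Q_def)
      moreover have "g (Q,B) = P"
      proof -
        have "Q - {B} = P - {C}" using Bnin by (auto simp: Q_def)
        moreover have "insert x B = C" using C by (auto simp: B_def)
        ultimately show ?thesis using C(1) by (auto simp: g_def)
      qed
      ultimately show "P \<in> g ` S" by force
    qed
  qed
  have "card S = (\<Sum>Q\<in>Parts A (Suc M). card Q)"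
    unfolding S_def
  proof (rule card_SigmaI)
    show "finite (Parts A (Suc M))" using finite_Parts[OF fin] .
    show "\<forall>a\<in>Parts A (Suc M). finite a" using finite_elements[OF fin] by (auto simp: Parts_def)
  qed
  also have "\<dots> = (\<Sum>Q\<in>Parts A (Suc M). Suc M)" by (rule sum.cong) (auto simp: Parts_def)
  also have "\<dots> = Suc M * card (Parts A (Suc M))" by simp
  finally have "card S = Suc M * card (Parts A (Suc M))" .
  with card_image[OF inj] img show ?thesis by simp
qed

lemma Parts_rec:
  assumes fin: "finite A" and x: "x \<notin> A" "x \<noteq> 1" "x \<noteq> 2"
  shows "card (Parts (insert x A) (Suc M)) = card (Parts A M) + Suc M * card (Parts A (Suc M))"
proof -
  let ?X = "Parts (insert x A) (Suc M)"
  have "?X = {P \<in> ?X. {x} \<in> P} \<union> {P \<in> ?X. {x} \<notin> P}" by blast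
  moreover have "finite ?X" using finite_Parts fin by simp
  ultimately have "card ?X = card {P \<in> ?X. {x} \<in> P} + card {P \<in> ?X. {x} \<notin> P}"
    by (metis (no_types, lifting) card_Un_disjoint disjoint_iff finite_Un mem_Collect_eq)
  then show ?thesis using Parts_rec1[OF assms] Parts_rec2[OF assms] by simp
qed



definition dd :: "nat \<Rightarrow> (nat \<Rightarrow> int) \<Rightarrow> int" where
  "dd k g = (\<Sum>i\<le>k. (-1)^(k-i) * of_nat (k choose i) * g i)"

lemma dd_0 [simp]: "dd 0 g = g 0" by (simp add: dd_def)

lemma dd_Suc: "dd (Suc k) g = dd k (\<lambda>i. g (Suc i)) - dd k g"
proof -
  have A: "dd (Suc k) g = (-1)^(Suc k) * g 0 + dd k (\<lambda>i. g (Suc i))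
     + (\<Sum>i\<le>k. (-1)^(k-i) * of_nat (k choose Suc i) * g (Suc i))"
    unfolding dd_def
    by (subst sum.atMost_Suc_shift) (simp add: ring_distribs sum.distrib)
  have B: "dd k g = (\<Sum>i\<le>Suc k. (-1)^(k-i) * of_nat (k choose i) * g i)"
    unfolding dd_def by simp
  also have "\<dots> = (-1)^k * g 0 + (\<Sum>i\<le>k. (-1)^(k - Suc i) * of_nat (k choose Suc i) * g (Suc i))"
    by (subst sum.atMost_Suc_shift) simp
  also have "(\<Sum>i\<le>k. (-1)^(k - Suc i) * of_nat (k choose Suc i) * g (Suc i))
      = - (\<Sum>i\<le>k. (-1)^(k-i) * of_nat (k choose Suc i) * g (Suc i))"
  proof -
    have "(-1::int)^(k - Suc i) * of_nat (k choose Suc i) * g (Suc i)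
        = - ((-1)^(k-i) * of_nat (k choose Suc i) * g (Suc i))" if "i \<le> k" for i
    proof (cases "i < k")
      case True
      then have "k - i = Suc (k - Suc i)" by simp
      then show ?thesis by simp
    next
      case False
      with that have "i = k" by simp
      then show ?thesis by simp
    qed
    then show ?thesis by (simp add: sum_negf[symmetric])
  qed
  finally show ?thesis using A by simp
qed

lemma dd_mult_id: "dd (Suc k) (\<lambda>i. int i * h i) = int (Suc k) * dd k (\<lambda>i. h (Suc i))"
proof -
  have "dd (Suc k) (\<lambda>i. int i * h i) =
      (\<Sum>i\<le>k. (-1)^(Suc k - Suc i) * of_nat (Suc k choose Suc i) * (int (Suc i) * h (Suc i)))"
    unfolding dd_def by (subst sum.atMost_Suc_shift) simp
  also have "\<dots> = (\<Sum>i\<le>k. int (Suc k) * ((-1)^(k - i) * of_nat (k choose i) * h (Suc i)))"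
  proof (rule sum.cong[OF refl])
    fix i assume "i \<in> {..k}"
    have "of_nat (Suc k choose Suc i) * int (Suc i) = int (Suc k) * of_nat (k choose i)"
      using Suc_times_binomial_eq[of k i] by (metis of_nat_mult)
    then show "(-1)^(Suc k - Suc i) * of_nat (Suc k choose Suc i) * (int (Suc i) * h (Suc i))
        = int (Suc k) * ((-1)^(k - i) * of_nat (k choose i) * h (Suc i))"
    proof -
      assume e: "of_nat (Suc k choose Suc i) * int (Suc i) = int (Suc k) * of_nat (k choose i)"
      have "(-1)^(Suc k - Suc i) * of_nat (Suc k choose Suc i) * (int (Suc i) * h (Suc i))
          = (-1)^(k-i) * h (Suc i) * (of_nat (Suc k choose Suc i) * int (Suc i))"
        by (simp only: diff_Suc_Suc mult_ac)
      also have "\<dots> = (-1)^(k-i) * h (Suc i) * (int (Suc k) * of_nat (k choose i))"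
        by (simp only: e)
      also have "\<dots> = int (Suc k) * ((-1)^(k - i) * of_nat (k choose i) * h (Suc i))"
        by (simp only: mult_ac)
      finally show ?thesis .
    qed
  qed
  also have "\<dots> = int (Suc k) * dd k (\<lambda>i. h (Suc i))"
    unfolding dd_def by (simp add: sum_distrib_left)
  finally show ?thesis .
qed

lemma dd_sum: "dd k (\<lambda>i. \<Sum>j\<in>J. c j * f j i) = (\<Sum>j\<in>J. c j * dd k (f j))"
  unfolding dd_def by (simp add: sum_distrib_left sum_distrib_right mult_ac sum.swap[of _ J])

lemma dd_diff: "dd k (\<lambda>i. f i - h i) = dd k f - dd k h"
  unfolding dd_def by (simp add: algebra_simps sum_subtractf)

definition D :: "nat \<Rightarrow> nat \<Rightarrow> int" where "D n k = dd k (\<lambda>i. int i ^ n)"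

lemma D_rec: "D (Suc n) (Suc k) = int (Suc k) * (D n (Suc k) + D n k)"
proof -
  have "D (Suc n) (Suc k) = dd (Suc k) (\<lambda>i. int i * int i ^ n)" by (simp add: D_def)
  also have "\<dots> = int (Suc k) * dd k (\<lambda>i. int (Suc i) ^ n)" by (rule dd_mult_id)
  also have "dd k (\<lambda>i. int (Suc i) ^ n) = D n (Suc k) + D n k"
    unfolding D_def dd_Suc by simp
  finally show ?thesis .
qed

lemma D_0_Suc: "D 0 (Suc k) = 0"
  unfolding D_def dd_Suc by simp

lemma D_0_0: "D 0 0 = 1" by (simp add: D_def)

lemma D_Suc_0: "D (Suc n) 0 = 0" by (simp add: D_def)

lemma D_1: "D (Suc n) 1 = 1"
  unfolding D_def by (simp add: dd_def)

lemma D_zero: "n < k \<Longrightarrow> D n k = 0"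
proof (induction n arbitrary: k)
  case 0 then show ?case by (cases k) (auto simp: D_0_Suc)
next
  case (Suc n)
  then obtain k' where "k = Suc k'" by (cases k) auto
  with Suc show ?case by (simp add: D_rec)
qed

lemma dd_shift_poly: "dd (Suc n) (\<lambda>i. (int i + c) ^ n) = 0"
proof -
  have "(\<lambda>i. (int i + c) ^ n) = (\<lambda>i. \<Sum>j\<le>n. (of_nat (n choose j) * c ^ (n - j)) * int i ^ j)"
    by (rule ext) (simp add: binomial_ring mult_ac)
  then have "dd (Suc n) (\<lambda>i. (int i + c) ^ n) = (\<Sum>j\<le>n. (of_nat (n choose j) * c ^ (n - j)) * D j (Suc n))"
    by (simp add: dd_sum D_def)
  also have "\<dots> = 0" by (rule sum.neutral) (simp add: D_zero)
  finally show ?thesis .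
qed

definition Phi :: "nat \<Rightarrow> nat \<Rightarrow> int" where
  "Phi n N = (\<Sum>k\<le>n. dd k (\<lambda>i. (int i + int N) ^ n))"

definition Fb :: "nat \<Rightarrow> int" where "Fb n = (\<Sum>k\<le>n. D n k)"

definition S :: "nat \<Rightarrow> nat \<Rightarrow> int" where "S N n = (\<Sum>j<N. 2 ^ (N - Suc j) * int j ^ n)"

lemma Phi_Suc: "Phi n (Suc N) = 2 * Phi n N - int N ^ n"
proof -
  define g where "g = (\<lambda>i. (int i + int N) ^ n)"
  have "Phi n (Suc N) = (\<Sum>k\<le>n. dd k (\<lambda>i. g (Suc i)))"
    unfolding Phi_def g_def by (simp add: algebra_simps)
  also have "\<dots> = (\<Sum>k\<le>n. dd (Suc k) g) + (\<Sum>k\<le>n. dd k g)"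
    by (simp add: dd_Suc sum_subtractf)
  also have "(\<Sum>k\<le>n. dd (Suc k) g) = (\<Sum>k\<le>Suc n. dd k g) - dd 0 g"
    using sum.atMost_Suc_shift[of "\<lambda>k. dd k g" n] by simp
  also have "(\<Sum>k\<le>Suc n. dd k g) = (\<Sum>k\<le>n. dd k g) + dd (Suc n) g" by simp
  also have "dd (Suc n) g = 0" unfolding g_def by (rule dd_shift_poly)
  finally show ?thesis unfolding Phi_def g_def by simp
qed

lemma Phi_closed: "Phi n N = 2 ^ N * Fb n - S N n"
proof (induction N)
  case 0 then show ?case by (simp add: Phi_def Fb_def S_def D_def)
next
  case (Suc N)
  have "S (Suc N) n = 2 * S N n + int N ^ n"
  proof -
    have "S (Suc N) n = (\<Sum>j<N. 2 ^ (Suc N - Suc j) * int j ^ n) + int N ^ n"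
      by (simp add: S_def)
    also have "(\<Sum>j<N. 2 ^ (Suc N - Suc j) * int j ^ n) = (\<Sum>j<N. 2 * (2 ^ (N - Suc j) * int j ^ n))"
    proof (rule sum.cong[OF refl])
      fix j assume "j \<in> {..<N}"
      then have "Suc N - Suc j = Suc (N - Suc j)" by auto
      then show "2 ^ (Suc N - Suc j) * int j ^ n = 2 * (2 ^ (N - Suc j) * int j ^ n)" by simp
    qed
    finally show ?thesis by (simp add: S_def sum_distrib_left)
  qed
  with Suc show ?case by (simp add: Phi_Suc algebra_simps)
qed

lemma Phi_cong: "int N dvd Phi n N - Phi n 0"
proof -
  have "Phi n N - Phi n 0 = (\<Sum>k\<le>n. dd k (\<lambda>i. (int i + int N) ^ n - (int i + int 0) ^ n))"
    unfolding Phi_def by (simp add: dd_diff sum_subtractf)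
  also have "int N dvd \<dots>"
  proof (rule dvd_sum)
    fix k
    show "int N dvd dd k (\<lambda>i. (int i + int N) ^ n - (int i + int 0) ^ n)"
      unfolding dd_def
    proof (rule dvd_sum)
      fix i
      have "int N dvd (int i + int N) ^ n - (int i) ^ n"
        using power_diff_sumr2[of "int i + int N" n "int i"] by simp
      then show "int N dvd (-1) ^ (k - i) * of_nat (k choose i) * ((int i + int N) ^ n - (int i + int 0) ^ n)"
        by simp
    qed
  qed
  finally show ?thesis .
qed

lemma key_cong: "(2::int) ^ m dvd Fb n + S (2 ^ m) n"
proof -
  define N :: nat where "N = 2 ^ m"
  have "int N dvd Phi n N - Phi n 0" by (rule Phi_cong)
  moreover have "Phi n 0 = Fb n" using Phi_closed[of n 0] by (simp add: S_def)
  ultimately have "int N dvd 2 ^ N * Fb n - S N n - Fb n" using Phi_closed[of n N] by simp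
  then have d1: "(2::int) ^ m dvd 2 ^ N * Fb n - S N n - Fb n" by (simp add: N_def)
  have "m \<le> N" unfolding N_def using less_exp[of m] by linarith
  then have "(2::int) ^ m dvd 2 ^ N" by (rule le_imp_power_dvd)
  then have d2: "(2::int) ^ m dvd 2 ^ N * Fb n" by simp
  have "(2::int) ^ m dvd 2 ^ N * Fb n - (2 ^ N * Fb n - S N n - Fb n)"
    using dvd_diff[OF d2 d1] .
  then show ?thesis by (simp add: N_def add.commute)
qed


lemma s_D:
  assumes "2 \<le> N"
  shows "int (fact M * card (Parts {1..N} M)) = D N M - D (N-1) M"
  using assms
proof (induction N arbitrary: M rule: nat_induct_at_least)
  case base
  have e: "{1..2::nat} = {1,2}" by auto
  have D22: "D 2 2 = 2"
    using D_rec[of 1 1] D_zero[of 1 2] D_1[of 0] by (simp add: numeral_2_eq_2)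
  have D20: "D 2 0 = 0" using D_Suc_0[of 1] by (simp add: numeral_2_eq_2)
  have D10: "D 1 0 = 0" using D_Suc_0[of 0] by (simp add: numeral_2_eq_2)
  have D21: "D 2 1 = 1" using D_1[of 1] by (simp add: numeral_2_eq_2)
  have D11: "D 1 1 = 1" using D_1[of 0] by (simp add: numeral_2_eq_2)
  have D12: "D 1 2 = 0" using D_zero[of 1 2] by (simp add: numeral_2_eq_2)
  have cP: "card (Parts {1..2} M) = (if M = 2 then 1 else 0)" unfolding e Parts_base by simp
  show ?case
  proof (cases "M \<le> 2")
    case True
    then consider "M = 0" | "M = 1" | "M = 2" by linarith
    then show ?thesis
    proof cases
      case 1 then show ?thesis using cP D20 D10 by simp
    next
      case 2 then show ?thesis using cP D21 D11 by simp
    next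
      case 3 then show ?thesis using cP D22 D12 by simp
    qed
  next
    case False
    then show ?thesis using D_zero[of 2 M] D_zero[of 1 M] cP by simp
  qed
next
  case (Suc N)
  have e: "{1..Suc N} = insert (Suc N) {1..N}" by auto
  have x: "Suc N \<notin> {1..N}" "Suc N \<noteq> 1" "Suc N \<noteq> 2" using Suc.hyps by auto
  obtain N' where N': "N = Suc N'" using Suc.hyps by (cases N) auto
  show ?case
  proof (cases M)
    case 0
    then show ?thesis using Parts_zero[of "{1..Suc N}"] D_Suc_0[of N] D_Suc_0[of N'] N' by simp
  next
    case (Suc M')
    have r: "card (Parts {1..Suc N} (Suc M')) = card (Parts {1..N} M') + Suc M' * card (Parts {1..N} (Suc M'))"
      unfolding e by (rule Parts_rec) (use x in auto)
    have "int (fact (Suc M') * card (Parts {1..Suc N} (Suc M')))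
        = int (Suc M') * (int (fact M' * card (Parts {1..N} M')) + int (fact (Suc M') * card (Parts {1..N} (Suc M'))))"
      unfolding r by (simp add: algebra_simps)
    also have "\<dots> = int (Suc M') * (D N M' - D (N-1) M' + (D N (Suc M') - D (N-1) (Suc M')))"
      using Suc.IH[of M'] Suc.IH[of "Suc M'"] by simp
    also have "\<dots> = D (Suc N) (Suc M') - D N (Suc M')"
      using D_rec[of N M'] D_rec[of N' M'] N' by (simp add: algebra_simps)
    finally show ?thesis using Suc by simp
  qed
qed

lemma sum2: "(\<Sum>k\<le>Suc (Suc n). f k) = f 0 + f 1 + (\<Sum>k\<le>n. f (Suc (Suc k)))" for f :: "nat \<Rightarrow> int"
  by (simp add: sum.atMost_Suc_shift del: sum.atMost_Suc)

lemma rf_Fb: "int (r_fubini n 2) = Fb (n+2) - Fb (n+1)"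
proof -
  have "int (r_fubini n 2) = (\<Sum>k\<le>n. int (fact (k+2) * card (Parts {1..n+2} (k+2))))"
    unfolding r_fubini_def r_stirling_Parts by (simp add: atLeast0AtMost)
  also have "\<dots> = (\<Sum>k\<le>n. D (n+2) (k+2) - D (n+1) (k+2))"
    by (rule sum.cong[OF refl]) (subst s_D, auto)
  also have "\<dots> = Fb (n+2) - Fb (n+1)"
  proof -
    have a: "Fb (n+2) = D (n+2) 0 + D (n+2) 1 + (\<Sum>k\<le>n. D (n+2) (k+2))"
      unfolding Fb_def using sum2[of "D (n+2)" n] by simp
    have "Fb (n+1) = (\<Sum>k\<le>Suc (Suc n). D (n+1) k)"
      unfolding Fb_def using D_zero[of "n+1" "n+2"] by simp
    then have b: "Fb (n+1) = D (n+1) 0 + D (n+1) 1 + (\<Sum>k\<le>n. D (n+1) (k+2))"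
      using sum2[of "D (n+1)" n] by simp
    show ?thesis using a b D_Suc_0[of "n+1"] D_Suc_0[of n] D_1[of "n+1"] D_1[of n]
      by (simp add: sum_subtractf)
  qed
  finally show ?thesis .
qed

lemma odd_pow: assumes oa: "odd (a::int)" and k: "1 \<le> k" shows "2^(k+2) dvd a^(2^k) - 1"
  using k
proof (induction k rule: nat_induct_at_least)
  case base
  from oa obtain b where b: "a = 2*b+1" by (metis oddE)
  have "even (b*(b+1))" by simp
  then obtain c where c: "b*(b+1) = 2*c" by blast
  have "a^(2^1) - 1 = 8*c" using b c by (simp add: power2_eq_square algebra_simps)
  then show ?case by simp
next
  case (Suc k)
  have "a^(2^Suc k) - 1 = (a^(2^k) - 1) * (a^(2^k) + 1)"
    by (simp add: power_mult power2_eq_square algebra_simps)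
  moreover have h2: "2 dvd a^(2^k) + 1" using oa by simp
  have "2^(k+2) * 2 dvd (a^(2^k) - 1) * (a^(2^k) + 1)" by (rule mult_dvd_mono[OF Suc.IH h2])
  ultimately have "2^(k+2) * 2 dvd a^(2^Suc k) - 1" by simp
  moreover have "(2::int)^(Suc k + 2) = 2^(k+2) * 2" by simp
  ultimately show ?case by simp
qed

lemma combine:
  fixes W X Y Z :: int
  assumes "2^a dvd W" "2^b dvd X" "2^c dvd Y" "m \<le> a + b + c"
  shows "2^m dvd W * (Z * X * Y)"
proof -
  have "2^a * (2^b * 2^c) dvd W * (X * Y)" using assms by (simp add: mult_dvd_mono)
  then have "2^(a+b+c) dvd W * (X * Y)" by (simp add: power_add mult.assoc)
  then have "2^m dvd W * (X * Y)" using assms(4) by (meson dvd_trans le_imp_power_dvd)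
  then show ?thesis by (metis dvd_mult mult.assoc mult.left_commute)
qed

lemma term_dvd:
  assumes m: "7 \<le> m" and n: "m - 1 \<le> n" and j: "j < (2::nat)^m"
  shows "(2::int)^m dvd 2^(2^m - Suc j) *
      (int j^(n + 2^(m-6) + 2) - int j^(n + 2^(m-6) + 1) - int j^(n+2) + int j^(n+1))"
proof -
  define P :: nat where "P = 2^(m-6)"
  define e where "e = 2^m - Suc j"
  have fac: "int j^(n + P + 2) - int j^(n + P + 1) - int j^(n+2) + int j^(n+1)
      = int j^(n+1) * (int j - 1) * (int j ^ P - 1)"
    by (simp add: power_add algebra_simps)
  have goal: "(2::int)^m dvd 2^e * (int j^(n+1) * (int j - 1) * (int j ^ P - 1))"
  proof (cases "m \<le> e")
    case True
    then have "(2::int)^m dvd 2^e" by (rule le_imp_power_dvd)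
    then show ?thesis by simp
  next
    case False
    show ?thesis
    proof (cases "even j")
      case True
      then obtain t where "j = 2*t" by blast
      then have "int j^(n+1) = 2^(n+1) * int t^(n+1)" by (simp add: power_mult_distrib)
      moreover have "(2::int)^m dvd 2^(n+1)" using n m by (intro le_imp_power_dvd) simp
      ultimately have h: "(2::int)^m dvd int j^(n+1)" by simp
      show ?thesis by (rule dvd_mult[OF dvd_mult2[OF dvd_mult2[OF h]]])
    next
      case oj: False
      have k1: "1 \<le> m - 6" using m by simp
      have pp: "(2::int)^(m-6+2) dvd int j ^ P - 1"
        unfolding P_def using odd_pow[OF _ k1, of "int j"] oj by simp
      have me: "m - 6 + 2 = m - 4" using m by simp
      have pp': "(2::int)^(m-4) dvd int j ^ P - 1" using pp unfolding me .
      have ev: "even e"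
      proof -
        have "even ((2::nat)^m)" using m by simp
        then show ?thesis unfolding e_def using oj j by presburger
      qed
      have "e = 0 \<or> e = 2 \<or> 4 \<le> e" using ev by presburger
      then consider "e = 0" | "e = 2" | "4 \<le> e" by blast
      then show ?thesis
      proof cases
        case 1
        then have "Suc j = 2^m" using j unfolding e_def by simp
        then have "int (Suc j) = int (2^m)" by (rule arg_cong)
        then have jj: "int j + 1 = 2^m" by simp
        have Pe: "even P" unfolding P_def using k1 by (simp add: dvd_power)
        have "int j ^ P - (-1)^P = (int j - (-1)) * (\<Sum>i<P. (-1)^(P - Suc i) * int j^i)"
          by (rule power_diff_sumr2)
        then have "(2::int)^m dvd int j ^ P - 1" using Pe jj by simp
        then show ?thesis by (simp add: dvd_mult)
      next
        case 2
        have "j + 3 = 2^m" using 2 j unfolding e_def by simp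
        then have "int (j + 3) = int (2^m)" by (rule arg_cong)
        then have "int j = 2^m - 3" by simp
        moreover have "(2::int)^m = 4 * 2^(m-2)"
        proof -
          obtain q where q: "m = q + 2" using m by (intro that[of "m-2"]) simp
          then show ?thesis by (simp add: power_add)
        qed
        ultimately have eq: "int j - 1 = 4 * (2^(m-2) - 1)" by simp
        have "(2::int)^2 dvd 4 * (2^(m-2) - 1)" by simp
        then have "(2::int)^2 dvd int j - 1" by (simp only: eq)
        moreover have "(2::int)^2 dvd 2^e" using 2 by simp
        ultimately show ?thesis using combine[of 2 "2^e" 2 "int j - 1" "m-4" "int j^P - 1" m "int j^(n+1)"] pp' m by simp
      next
        case 3
        have "(2::int)^4 dvd 2^e" using 3 by (rule le_imp_power_dvd)
        moreover have "(2::int)^1 dvd int j - 1" using oj by simp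
        ultimately show ?thesis using combine[of 4 "2^e" 1 "int j - 1" "m-4" "int j^P - 1" m "int j^(n+1)"] pp' m by simp
      qed
    qed
  qed
  show ?thesis using goal fac unfolding P_def e_def by simp
qed

theorem theorem4p4:
  fixes m n :: nat
  assumes "m \<ge> 7" and "n \<ge> m - 1"
  shows "r_fubini (n + 2 ^ (m - 6)) 2 mod 2 ^ m = r_fubini n 2 mod 2 ^ m"
proof -
  define P :: nat where "P = 2 ^ (m - 6)"
  define N0 :: nat where "N0 = 2 ^ m"
  have k: "\<And>x. (2::int)^m dvd Fb x + S N0 x" unfolding N0_def by (rule key_cong)
  have e1: "int (r_fubini (n + P) 2) - int (r_fubini n 2)
      = (Fb (n+P+2) + S N0 (n+P+2)) - (Fb (n+P+1) + S N0 (n+P+1)) - (Fb (n+2) + S N0 (n+2))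
        + (Fb (n+1) + S N0 (n+1))
        - (S N0 (n+P+2) - S N0 (n+P+1) - S N0 (n+2) + S N0 (n+1))"
    using rf_Fb[of "n+P"] rf_Fb[of n] by simp
  have e2: "S N0 (n+P+2) - S N0 (n+P+1) - S N0 (n+2) + S N0 (n+1)
      = (\<Sum>j<N0. 2^(N0 - Suc j) * (int j^(n+P+2) - int j^(n+P+1) - int j^(n+2) + int j^(n+1)))"
    unfolding S_def by (simp add: sum_subtractf sum.distrib algebra_simps)
  have "(2::int)^m dvd (\<Sum>j<N0. 2^(N0 - Suc j) * (int j^(n+P+2) - int j^(n+P+1) - int j^(n+2) + int j^(n+1)))"
  proof (rule dvd_sum)
    fix j assume "j \<in> {..<N0}"
    then have "j < 2^m" by (simp add: N0_def)
    from term_dvd[OF assms this] show "(2::int)^m dvd 2^(N0 - Suc j) * (int j^(n+P+2) - int j^(n+P+1) - int j^(n+2) + int j^(n+1))"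
      by (simp add: N0_def P_def)
  qed
  then have "(2::int)^m dvd int (r_fubini (n + P) 2) - int (r_fubini n 2)"
    unfolding e1 e2[symmetric] by (rule dvd_diff[OF dvd_add[OF dvd_diff[OF dvd_diff[OF k k] k] k]])
  then have "int (r_fubini (n + P) 2) mod 2^m = int (r_fubini n 2) mod 2^m"
    by (simp add: mod_eq_dvd_iff)
  then have "int (r_fubini (n + P) 2 mod 2^m) = int (r_fubini n 2 mod 2^m)"
    by (simp add: of_nat_mod)
  then show ?thesis unfolding P_def by simp
qed

end
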